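(* Let $n$ be even and let $N$ be a $5$-net of order $n$ with parallel classes $\Pi_0,\dots,\Pi_4$ and a relation $\mathcal R$ of type $(\lambda_0,\dots,\lambda_4)$. Put $g_i=\frac n2-\lambda_i$. Then for every $\mathbf b=(b_0,\dots,b_4)\in\{0,1\}^5$ with an even number of ones, $$t_{\mathbf b}=\frac1{16}n^2+\frac18 n\sum_{i=0}^{4}(-1)^{b_i}g_i+\frac14\sum_{0\le i<j\le 4}(-1)^{b_i+b_j}g_ig_j .$$
   Context: A $k$-net of order $n$ is a set $P$ of $n^2$ points together with a set $L$ of $kn$ lines (subsets of $P$), each line containing $n$ points and each point lying on $k$ lines, such that $L$ partitions into $k$ parallel classes $\Pi_0,\dots,\Pi_{k-1}$ of $n$ pairwise disjoint lines each, and any two lines from different parallel classes meet in exactly one point. A relation on a net is a set $\mathcal R\subseteq L$ such that every point lies on an even number of lines of $\mathcal R$. Its type is $(\lambda_0,\dots,\lambda_{k-1})$ with $\lambda_i=|\mathcal R\cap\Pi_i|$. The type of a point $p$ is the binary string $\mathbf b\in\{0,1\}^k$ with $b_i=1$ iff the line of $\Pi_i$ through $p$ lies in $\mathcal R$; $t_{\mathbf b}$ is the number of points of type $\mathbf b$. *)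

theory Defs
  imports Complex_Main
begin

definition net_lines :: "nat \<Rightarrow> (nat \<Rightarrow> 'p set set) \<Rightarrow> 'p set set" where
  "net_lines k Pi = (\<Union>i<k. Pi i)"

definition is_net :: "nat \<Rightarrow> nat \<Rightarrow> 'p set \<Rightarrow> (nat \<Rightarrow> 'p set set) \<Rightarrow> bool" where
  "is_net k n P Pi \<longleftrightarrow>
     finite P \<and> card P = n^2 \<and>
     finite (net_lines k Pi) \<and> card (net_lines k Pi) = k * n \<and>
     (\<forall>l\<in>net_lines k Pi. l \<subseteq> P \<and> card l = n) \<and>
     (\<forall>p\<in>P. card {l\<in>net_lines k Pi. p \<in> l} = k) \<and>
     (\<forall>i<k. \<forall>j<k. i \<noteq> j \<longrightarrow> Pi i \<inter> Pi j = {}) \<and>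
     (\<forall>i<k. card (Pi i) = n \<and>
        (\<forall>l\<in>Pi i. \<forall>m\<in>Pi i. l \<noteq> m \<longrightarrow> l \<inter> m = {})) \<and>
     (\<forall>i<k. \<forall>j<k. i \<noteq> j \<longrightarrow> (\<forall>l\<in>Pi i. \<forall>m\<in>Pi j. card (l \<inter> m) = 1))"

definition is_relation :: "nat \<Rightarrow> 'p set \<Rightarrow> (nat \<Rightarrow> 'p set set) \<Rightarrow> 'p set set \<Rightarrow> bool" where
  "is_relation k P Pi R \<longleftrightarrow>
     R \<subseteq> net_lines k Pi \<and> (\<forall>p\<in>P. even (card {l\<in>R. p \<in> l}))"

definition rel_type :: "(nat \<Rightarrow> 'p set set) \<Rightarrow> 'p set set \<Rightarrow> nat \<Rightarrow> nat" where
  "rel_type Pi R i = card (R \<inter> Pi i)"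

definition line_through :: "(nat \<Rightarrow> 'p set set) \<Rightarrow> nat \<Rightarrow> 'p \<Rightarrow> 'p set" where
  "line_through Pi i p = (THE l. l \<in> Pi i \<and> p \<in> l)"

definition t_count :: "nat \<Rightarrow> 'p set \<Rightarrow> (nat \<Rightarrow> 'p set set) \<Rightarrow> 'p set set \<Rightarrow> (nat \<Rightarrow> nat) \<Rightarrow> nat" where
  "t_count k P Pi R b = card {p\<in>P. \<forall>i<k. (b i = 1 \<longleftrightarrow> line_through Pi i p \<in> R)}"

end

theory Submission
  imports Defs
begin

lemma L32:
  fixes c0 c1 c2 c3 c4 :: bool
  assumes "even (of_bool c0 + of_bool c1 + of_bool c2 + of_bool c3 + of_bool c4 :: nat)"
   and "e True = -1" "e False = (1::real)"
  shows "(if \<not>c0 \<and> \<not>c1 \<and> \<not>c2 \<and> \<not>c3 \<and> \<not>c4 then 1 else 0 :: real) =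
     1/16 * (1 + (e c0 + e c1 + e c2 + e c3 + e c4)
      + (e c0 * e c1 + e c0 * e c2 + e c1 * e c2 + e c0 * e c3 + e c1 * e c3 + e c2 * e c3
         + e c0 * e c4 + e c1 * e c4 + e c2 * e c4 + e c3 * e c4))"
  using assms
  by (cases c0; cases c1; cases c2; cases c3; cases c4) simp_all

lemma pw:
  fixes b :: "nat \<Rightarrow> nat" and Y :: "nat \<Rightarrow> bool"
  assumes "\<forall>i<5. b i \<in> {0,1}" "even (\<Sum>i<5. b i)" "even (\<Sum>i<5. of_bool (Y i) :: nat)"
  shows "(if \<forall>i<5. (b i = 1 \<longleftrightarrow> Y i) then 1 else 0 :: real) =
     1/16 * (1 + (\<Sum>i<5. (-1)^(b i) * (1 - 2*of_bool(Y i)))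
         + (\<Sum>j<5. \<Sum>i<j. (-1)^(b i + b j) * (1-2*of_bool (Y i))*(1-2*of_bool(Y j))))"
proof -
  define c where "c i = ((b i = 1) \<noteq> Y i)" for i
  define e where "e \<equiv> \<lambda>c. (if c then -1 else 1 :: real)"
  have b: "\<And>i. i < 5 \<Longrightarrow> b i = 0 \<or> b i = 1" using assms(1) by auto
  have t1: "(-1)^(b i) * (1 - 2*of_bool(Y i)) = e (c i)" if "i < 5" for i
    using b[OF that] by (auto simp: e_def c_def)
  have t2: "(-1)^(b i + b j) * (1-2*of_bool (Y i))*(1-2*of_bool(Y j)) = e (c i) * e (c j)"
    if "i < 5" "j < 5" for i j
    using b[OF that(1)] b[OF that(2)] by (auto simp: e_def c_def)
  have s1: "(\<Sum>i<5. (-1)^(b i) * (1 - 2*of_bool(Y i))) = (\<Sum>i<5. e (c i))"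
    by (rule sum.cong) (auto simp: t1)
  have s2: "(\<Sum>j<5. \<Sum>i<j. (-1)^(b i + b j) * (1-2*of_bool (Y i))*(1-2*of_bool(Y j)))
      = (\<Sum>j<5. \<Sum>i<j. e (c i) * e (c j))"
    by (rule sum.cong, simp, rule sum.cong) (auto simp: t2)
  have pc: "of_bool (c i) + 2 * of_bool (b i = 1 \<and> Y i) = b i + (of_bool (Y i) :: nat)" if "i<5" for i
    using b[OF that] by (auto simp: c_def)
  have "(\<Sum>i<5. of_bool (c i)) + 2 * (\<Sum>i<5. of_bool (b i = 1 \<and> Y i)) = (\<Sum>i<5. b i) + (\<Sum>i<5. of_bool (Y i) :: nat)"
  proof -
    have "(\<Sum>i<5. of_bool (c i)) + 2 * (\<Sum>i<5. of_bool (b i = 1 \<and> Y i))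
       = (\<Sum>i<5. of_bool (c i) + 2 * (of_bool (b i = 1 \<and> Y i) :: nat))"
      by (simp only: sum.distrib sum_distrib_left)
    also have "\<dots> = (\<Sum>i<5. b i + (of_bool (Y i) :: nat))"
      by (rule sum.cong) (use pc in blast)+
    also have "\<dots> = (\<Sum>i<5. b i) + (\<Sum>i<5. of_bool (Y i) :: nat)"
      by (simp only: sum.distrib)
    finally show ?thesis .
  qed
  then have "even ((\<Sum>i<5. of_bool (c i)) + 2 * (\<Sum>i<5. of_bool (b i = 1 \<and> Y i)) :: nat)"
    using assms(2,3) by (simp only:) simp
  then have ev: "even (\<Sum>i<5. of_bool (c i) :: nat)" by simp
  have A: "(\<forall>i<5. P i) \<longleftrightarrow> P 0 \<and> P 1 \<and> P 2 \<and> P 3 \<and> P (4::nat)" for P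
    by (auto simp: less_Suc_eq numeral_eq_Suc)
  have ind: "(\<forall>i<5. (b i = 1 \<longleftrightarrow> Y i)) \<longleftrightarrow> \<not>c 0 \<and> \<not>c 1 \<and> \<not>c 2 \<and> \<not>c 3 \<and> \<not>c 4"
    unfolding A c_def by simp
  have ev': "even (of_bool (c 0) + of_bool (c 1) + of_bool (c 2) + of_bool (c 3) + of_bool (c 4) :: nat)"
    using ev by (simp add: numeral_eq_Suc add.commute add.left_commute)
  show ?thesis unfolding s1 s2 ind
    using L32[OF ev', of e] 
    by (simp add: e_def numeral_eq_Suc algebra_simps del: if_split)
qed

lemma net_facts:
  assumes "is_net k n P Pi"
  shows "finite P" "card P = n^2"
    and "\<And>i l. i<k \<Longrightarrow> l \<in> Pi i \<Longrightarrow> l \<subseteq> P \<and> card l = n"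
    and "\<And>i j. i<k \<Longrightarrow> j<k \<Longrightarrow> i \<noteq> j \<Longrightarrow> Pi i \<inter> Pi j = {}"
    and "\<And>i. i<k \<Longrightarrow> card (Pi i) = n \<and> finite (Pi i)"
    and "\<And>i l m. i<k \<Longrightarrow> l\<in>Pi i \<Longrightarrow> m\<in>Pi i \<Longrightarrow> l \<noteq> m \<Longrightarrow> l \<inter> m = {}"
    and "\<And>i j l m. i<k \<Longrightarrow> j<k \<Longrightarrow> i \<noteq> j \<Longrightarrow> l\<in>Pi i \<Longrightarrow> m\<in>Pi j \<Longrightarrow> card (l \<inter> m) = 1"
proof -
  have sub: "\<And>i. i<k \<Longrightarrow> Pi i \<subseteq> net_lines k Pi" unfolding net_lines_def by blast
  have d1: "finite P" using assms unfolding is_net_def by (elim conjE) assumption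
  have d2: "card P = n^2" using assms unfolding is_net_def by (elim conjE) assumption
  have d3: "\<forall>l\<in>net_lines k Pi. l \<subseteq> P \<and> card l = n" using assms unfolding is_net_def by (elim conjE) assumption
  have d4: "\<forall>i<k. \<forall>j<k. i \<noteq> j \<longrightarrow> Pi i \<inter> Pi j = {}" using assms unfolding is_net_def by (elim conjE) assumption
  have d5: "\<forall>i<k. card (Pi i) = n \<and> (\<forall>l\<in>Pi i. \<forall>m\<in>Pi i. l \<noteq> m \<longrightarrow> l \<inter> m = {})"
    using assms unfolding is_net_def by (elim conjE) assumption
  have d6: "\<forall>i<k. \<forall>j<k. i \<noteq> j \<longrightarrow> (\<forall>l\<in>Pi i. \<forall>m\<in>Pi j. card (l \<inter> m) = 1)"
    using assms unfolding is_net_def by (elim conjE) assumption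
  have d7: "finite (net_lines k Pi)" using assms unfolding is_net_def by (elim conjE) assumption
  show "finite P" "card P = n^2" using d1 d2 by auto
  show "\<And>i l. i<k \<Longrightarrow> l \<in> Pi i \<Longrightarrow> l \<subseteq> P \<and> card l = n"
    using d3 sub by blast
  show "\<And>i j. i<k \<Longrightarrow> j<k \<Longrightarrow> i \<noteq> j \<Longrightarrow> Pi i \<inter> Pi j = {}"
    using d4 by blast
  show "\<And>i. i<k \<Longrightarrow> card (Pi i) = n \<and> finite (Pi i)"
    using d5 d7 sub by (meson finite_subset)
  show "\<And>i l m. i<k \<Longrightarrow> l\<in>Pi i \<Longrightarrow> m\<in>Pi i \<Longrightarrow> l \<noteq> m \<Longrightarrow> l \<inter> m = {}"
    using d5 by blast
  show "\<And>i j l m. i<k \<Longrightarrow> j<k \<Longrightarrow> i \<noteq> j \<Longrightarrow> l\<in>Pi i \<Longrightarrow> m\<in>Pi j \<Longrightarrow> card (l \<inter> m) = 1"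
    using d6 by blast
qed

lemma net_cover:
  assumes "is_net k n P Pi" "i < k" "p \<in> P"
  shows "\<exists>l\<in>Pi i. p \<in> l"
proof -
  note F = net_facts[OF assms(1)]
  have U: "\<Union>(Pi i) \<subseteq> P" using F(3)[OF assms(2)] by blast
  have "card (\<Union>(Pi i)) = sum card (Pi i)"
    apply (rule card_Union_disjoint)
    subgoal unfolding pairwise_def disjnt_def using F(6)[OF assms(2)] by blast
    subgoal for A using F(3)[OF assms(2)] F(1) finite_subset by blast
    done
  also have "\<dots> = n * n" using F(3)[OF assms(2)] F(5)[OF assms(2)] by simp
  finally have "\<Union>(Pi i) = P" using card_subset_eq[OF F(1) U] F(2) by (simp add: power2_eq_square)
  then show ?thesis using assms(3) by blast
qed

lemma lt_in:
  assumes "is_net k n P Pi" "i < k" "p \<in> P"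
  shows "line_through Pi i p \<in> Pi i \<and> p \<in> line_through Pi i p"
proof -
  note F = net_facts[OF assms(1)]
  have "\<exists>!l. l \<in> Pi i \<and> p \<in> l" using net_cover[OF assms] F(6)[OF assms(2)] by blast
  then show ?thesis unfolding line_through_def by (rule theI')
qed

lemma lt_eq:
  assumes "is_net k n P Pi" "i < k" "l \<in> Pi i" "p \<in> l"
  shows "line_through Pi i p = l"
proof -
  note F = net_facts[OF assms(1)]
  have "p \<in> P" using F(3)[OF assms(2,3)] assms(4) by blast
  show ?thesis unfolding line_through_def
    apply (rule the_equality)
    using assms F(6)[OF assms(2)] by blast+
qed

lemma sum_of_bool_card:
  "finite A \<Longrightarrow> (\<Sum>x\<in>A. of_bool (Q x) :: real) = real (card {x\<in>A. Q x})"
  by (simp add: sum.inter_filter[symmetric] Int_def)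

lemma key_alg: "1/16*(real (n^2) + 2*real n*S1 + 4*S2) = (real n)^2/16 + real n/8*S1 + 1/4*(S2::real)"
  by (simp add: field_simps)

theorem mainTheorem2:
  fixes n :: nat and P :: "'p set" and Pi :: "nat \<Rightarrow> 'p set set"
    and R :: "'p set set" and b :: "nat \<Rightarrow> nat"
  assumes "even n"
    and "is_net 5 n P Pi"
    and "is_relation 5 P Pi R"
    and "\<forall>i<5. b i \<in> {0, 1}"
    and "even (\<Sum>i<5. b i)"
  shows "real (t_count 5 P Pi R b) =
           (real n)^2 / 16
         + real n / 8 * (\<Sum>i<5. (-1)^(b i) * (real n / 2 - real (rel_type Pi R i)))
         + 1/4 * (\<Sum>j<5. \<Sum>i<j. (-1)^(b i + b j)
                    * (real n / 2 - real (rel_type Pi R i))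
                    * (real n / 2 - real (rel_type Pi R j)))"
proof -
  note F = net_facts[OF assms(2)]
  define X where "X i p = (line_through Pi i p \<in> R)" for i p
  define lam where "lam i = rel_type Pi R i" for i
  define g where "g i = real n / 2 - real (lam i)" for i
  have RL: "R \<subseteq> net_lines 5 Pi" "\<And>p. p\<in>P \<Longrightarrow> even (card {l\<in>R. p \<in> l})"
    using assms(3) unfolding is_relation_def by auto
  have cA: "card {p\<in>P. X i p} = lam i * n" if i: "i < 5" for i
  proof -
    have "{p\<in>P. X i p} = \<Union>(R \<inter> Pi i)"
      using lt_in[OF assms(2) i] lt_eq[OF assms(2) i] F(3)[OF i] unfolding X_def by blast
    moreover have "card (\<Union>(R \<inter> Pi i)) = sum card (R \<inter> Pi i)"
      apply (rule card_Union_disjoint)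
      subgoal unfolding pairwise_def disjnt_def using F(6)[OF i] by blast
      subgoal for A using F(3)[OF i] F(1) finite_subset by blast
      done
    moreover have "sum card (R \<inter> Pi i) = lam i * n"
      using F(3)[OF i] unfolding lam_def rel_type_def by simp
    ultimately show ?thesis by simp
  qed
  have cB: "card {p\<in>P. X i p \<and> X j p} = lam i * lam j" if i: "i < 5" and j: "j < 5" and ij: "i \<noteq> j" for i j
  proof -
    have "bij_betw (\<lambda>p. (line_through Pi i p, line_through Pi j p)) {p\<in>P. X i p \<and> X j p}
          ((R \<inter> Pi i) \<times> (R \<inter> Pi j))"
    proof (rule bij_betw_imageI)
      show "inj_on (\<lambda>p. (line_through Pi i p, line_through Pi j p)) {p\<in>P. X i p \<and> X j p}"
      proof (rule inj_onI)
        fix p q assume p: "p \<in> {p\<in>P. X i p \<and> X j p}" and q: "q \<in> {p\<in>P. X i p \<and> X j p}"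
          and e: "(line_through Pi i p, line_through Pi j p) = (line_through Pi i q, line_through Pi j q)"
        let ?l = "line_through Pi i p" and ?m = "line_through Pi j p"
        have "p \<in> ?l \<inter> ?m" "q \<in> ?l \<inter> ?m"
          using lt_in[OF assms(2) i] lt_in[OF assms(2) j] p q e by auto
        moreover have "card (?l \<inter> ?m) = 1"
          using F(7)[OF i j ij] lt_in[OF assms(2) i] lt_in[OF assms(2) j] p by auto
        ultimately show "p = q" by (metis card_1_singletonE singletonD)
      qed
      show "(\<lambda>p. (line_through Pi i p, line_through Pi j p)) ` {p\<in>P. X i p \<and> X j p} = (R \<inter> Pi i) \<times> (R \<inter> Pi j)"
      proof
        show "(\<lambda>p. (line_through Pi i p, line_through Pi j p)) ` {p\<in>P. X i p \<and> X j p} \<subseteq> (R \<inter> Pi i) \<times> (R \<inter> Pi j)"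
          using lt_in[OF assms(2) i] lt_in[OF assms(2) j] unfolding X_def by auto
        show "(R \<inter> Pi i) \<times> (R \<inter> Pi j) \<subseteq> (\<lambda>p. (line_through Pi i p, line_through Pi j p)) ` {p\<in>P. X i p \<and> X j p}"
        proof
          fix x assume x: "x \<in> (R \<inter> Pi i) \<times> (R \<inter> Pi j)"
          then obtain l m where lm: "x = (l, m)" "l \<in> R" "l \<in> Pi i" "m \<in> R" "m \<in> Pi j" by auto
          have "card (l \<inter> m) = 1" using F(7)[OF i j ij lm(3,5)] .
          then obtain a where a: "a \<in> l" "a \<in> m" by (metis card_1_singletonE insertI1 IntE)
          have "a \<in> P" using F(3)[OF i lm(3)] a by blast
          moreover have "line_through Pi i a = l" "line_through Pi j a = m"
            using lt_eq[OF assms(2) i lm(3) a(1)] lt_eq[OF assms(2) j lm(5) a(2)] by auto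
          ultimately show "x \<in> (\<lambda>p. (line_through Pi i p, line_through Pi j p)) ` {p\<in>P. X i p \<and> X j p}"
            using lm unfolding X_def by (auto intro!: image_eqI[where x=a])
        qed
      qed
    qed
    then have "card {p\<in>P. X i p \<and> X j p} = card ((R \<inter> Pi i) \<times> (R \<inter> Pi j))"
      by (rule bij_betw_same_card)
    then show ?thesis unfolding lam_def rel_type_def by (simp add: card_cartesian_product)
  qed
  have par: "even (\<Sum>i<5. of_bool (X i p) :: nat)" if p: "p \<in> P" for p
  proof -
    have "bij_betw (\<lambda>i. line_through Pi i p) {i. i < 5 \<and> X i p} {l\<in>R. p \<in> l}"
    proof (rule bij_betw_imageI)
      show "inj_on (\<lambda>i. line_through Pi i p) {i. i < 5 \<and> X i p}"
      proof (rule inj_onI)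
        fix i j assume "i \<in> {i. i < 5 \<and> X i p}" "j \<in> {i. i < 5 \<and> X i p}"
          "line_through Pi i p = line_through Pi j p"
        then show "i = j" using lt_in[OF assms(2) _ p, of i] lt_in[OF assms(2) _ p, of j] F(4)[of i j]
          by auto
      qed
      show "(\<lambda>i. line_through Pi i p) ` {i. i < 5 \<and> X i p} = {l\<in>R. p \<in> l}"
      proof
        show "(\<lambda>i. line_through Pi i p) ` {i. i < 5 \<and> X i p} \<subseteq> {l\<in>R. p \<in> l}"
          using lt_in[OF assms(2) _ p] unfolding X_def by auto
        show "{l\<in>R. p \<in> l} \<subseteq> (\<lambda>i. line_through Pi i p) ` {i. i < 5 \<and> X i p}"
        proof
          fix l assume l: "l \<in> {l\<in>R. p \<in> l}"
          then obtain i where i: "i < 5" "l \<in> Pi i" using RL(1) unfolding net_lines_def by blast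
          have "line_through Pi i p = l" using lt_eq[OF assms(2) i] l by blast
          then show "l \<in> (\<lambda>i. line_through Pi i p) ` {i. i < 5 \<and> X i p}"
            using i l unfolding X_def by (auto intro!: image_eqI[where x=i])
        qed
      qed
    qed
    then have "card {i. i < 5 \<and> X i p} = card {l\<in>R. p \<in> l}" by (rule bij_betw_same_card)
    moreover have "card {i. i < 5 \<and> X i p} = (\<Sum>i<5. of_bool (X i p) :: nat)"
      by (simp add: sum.inter_filter[symmetric] lessThan_def Collect_conj_eq[symmetric])
    ultimately show ?thesis using RL(2)[OF p] by simp
  qed

  have sA: "(\<Sum>p\<in>P. of_bool (X i p)) = real (lam i) * real n" if "i < 5" for i
    unfolding sum_of_bool_card[OF F(1)] cA[OF that] by simp
  have sB: "(\<Sum>p\<in>P. of_bool (X i p \<and> X j p)) = real (lam i) * real (lam j)"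
    if "i < 5" "j < 5" "i \<noteq> j" for i j
    unfolding sum_of_bool_card[OF F(1)] cB[OF that] by simp
  define a where "a i p = (-1)^(b i) * (1 - 2*of_bool(X i p) :: real)" for i p
  define c where "c i j p = (-1)^(b i + b j) * (1-2*of_bool (X i p))*(1-2*of_bool(X j p) :: real)" for i j p
  have "t_count 5 P Pi R b = card {p\<in>P. \<forall>i<5. (b i = 1 \<longleftrightarrow> X i p)}"
    unfolding t_count_def X_def ..
  then have "real (t_count 5 P Pi R b) = (\<Sum>p\<in>P. if \<forall>i<5. (b i = 1 \<longleftrightarrow> X i p) then 1 else 0)"
    using F(1) by (simp add: sum.inter_filter[symmetric])
  also have "\<dots> = (\<Sum>p\<in>P. 1/16 * (1 + (\<Sum>i<5. a i p) + (\<Sum>j<5. \<Sum>i<j. c i j p)))"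
    by (rule sum.cong) (use pw[OF assms(4,5) par] in \<open>auto simp: a_def c_def\<close>)
  also have "\<dots> = 1/16 * (real (card P) + (\<Sum>i<5. \<Sum>p\<in>P. a i p) + (\<Sum>j<5. \<Sum>i<j. \<Sum>p\<in>P. c i j p))"
  proof -
    have s1: "(\<Sum>p\<in>P. \<Sum>i<5. a i p) = (\<Sum>i<5. \<Sum>p\<in>P. a i p)" by (rule sum.swap)
    have s2: "(\<Sum>p\<in>P. \<Sum>j<5. \<Sum>i<j. c i j p) = (\<Sum>j<5. \<Sum>p\<in>P. \<Sum>i<j. c i j p)" by (rule sum.swap)
    have s3: "(\<Sum>j<5. \<Sum>p\<in>P. \<Sum>i<j. c i j p) = (\<Sum>j<5. \<Sum>i<j. \<Sum>p\<in>P. c i j p)"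
      by (rule sum.cong[OF refl], rule sum.swap)
    have "(\<Sum>p\<in>P. 1/16 * (1 + (\<Sum>i<5. a i p) + (\<Sum>j<5. \<Sum>i<j. c i j p)))
        = 1/16 * (\<Sum>p\<in>P. (1 + (\<Sum>i<5. a i p) + (\<Sum>j<5. \<Sum>i<j. c i j p)))"
      by (rule sum_distrib_left[symmetric])
    also have "(\<Sum>p\<in>P. (1 + (\<Sum>i<5. a i p) + (\<Sum>j<5. \<Sum>i<j. c i j p)))
        = real (card P) + (\<Sum>p\<in>P. \<Sum>i<5. a i p) + (\<Sum>p\<in>P. \<Sum>j<5. \<Sum>i<j. c i j p)"
      by (simp only: sum.distrib) simp
    finally show ?thesis unfolding s1 s2 s3 .
  qed
  also have "(\<Sum>i<5. \<Sum>p\<in>P. a i p) = (\<Sum>i<5. (-1)^(b i) * (2 * real n * g i))"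
  proof (rule sum.cong)
    fix i assume "i \<in> {..<5::nat}"
    then have i: "i < 5" by simp
    have "(\<Sum>p\<in>P. a i p) = (-1)^(b i) * (real (card P) - 2 * (\<Sum>p\<in>P. of_bool (X i p)))"
      unfolding a_def by (simp add: sum_distrib_left sum_subtractf algebra_simps)
    also have "\<dots> = (-1)^(b i) * (2 * real n * g i)"
      using sA[OF i] F(1,2) by (simp add: sum_of_bool_card g_def algebra_simps power2_eq_square)
    finally show "(\<Sum>p\<in>P. a i p) = (-1)^(b i) * (2 * real n * g i)" .
  qed simp
  also have "(\<Sum>j<5. \<Sum>i<j. \<Sum>p\<in>P. c i j p) = (\<Sum>j<5. \<Sum>i<j. (-1)^(b i + b j) * (4 * g i * g j))"
  proof (rule sum.cong, simp, rule sum.cong, simp)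
    fix i j assume "j \<in> {..<5::nat}" "i \<in> {..<j}"
    then have j: "j < 5" and i: "i < 5" and ij: "i \<noteq> j" by auto
    have e: "(1-2*of_bool (X i p))*(1-2*of_bool(X j p) :: real)
       = 1 - 2 * of_bool (X i p) - 2 * of_bool (X j p) + 4 * of_bool (X i p \<and> X j p)" for p
      by auto
    have "(\<Sum>p\<in>P. c i j p) = (-1)^(b i + b j) * (real (card P) - 2 * (\<Sum>p\<in>P. of_bool (X i p))
         - 2 * (\<Sum>p\<in>P. of_bool (X j p)) + 4 * (\<Sum>p\<in>P. of_bool (X i p \<and> X j p)))"
      unfolding c_def mult.assoc e by (simp add: sum_distrib_left sum_subtractf sum.distrib algebra_simps)
    also have "\<dots> = (-1)^(b i + b j) * (4 * g i * g j)"
      using sA[OF i] sA[OF j] sB[OF i j ij] F(1,2)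
      by (simp add: sum_of_bool_card g_def algebra_simps power2_eq_square)
    finally show "(\<Sum>p\<in>P. c i j p) = (-1)^(b i + b j) * (4 * g i * g j)" .
  qed
  finally have fin: "real (t_count 5 P Pi R b) = 1/16 * (real (card P)
     + (\<Sum>i<5. (-1)^(b i) * (2 * real n * g i)) + (\<Sum>j<5. \<Sum>i<j. (-1)^(b i + b j) * (4 * g i * g j)))" .
  have e1: "(\<Sum>i<5. (-1)^(b i) * (2 * real n * g i)) = 2 * real n * (\<Sum>i<5. (-1)^(b i) * g i)"
    by (simp add: sum_distrib_left mult_ac)
  have e2: "(\<Sum>j<5. \<Sum>i<j. (-1)^(b i + b j) * (4 * g i * g j)) = 4 * (\<Sum>j<5. \<Sum>i<j. (-1)^(b i + b j) * g i * g j)"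
    by (simp add: sum_distrib_left mult_ac)
  show ?thesis unfolding lam_def[symmetric] g_def[symmetric] fin e1 e2 F(2)
    by (rule key_alg)
qed

end
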